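(* Let $M$ be a simply laced spherical Coxeter diagram, $B$ a set of mutually orthogonal positive roots, $\beta,\gamma\in B$ and $j$ a node of $M$. Then: (i) there is no node $i$ with $(\alpha_i,\beta)=1$, $(\alpha_i,\gamma)=-1$ and $\mathrm{ht}(\beta)=\mathrm{ht}(\gamma)+1$; (ii) if $(\alpha_j,\beta)=-1$, $(\alpha_j,\gamma)=1$ and $\mathrm{ht}(\gamma)=\mathrm{ht}(\beta)+2$, then there is no node $i$ with $\alpha_i\in B^\perp$ and $i\sim j$.
   Context: $M$ has nodes $1,\dots,n$; for distinct nodes, $i\sim j$ means they are joined by an edge. $\Phi^+$ is the set of positive roots of the root system of type $M$, with fundamental roots $\alpha_i$ and inner product normalized by $(\alpha_i,\alpha_i)=2$, $(\alpha_i,\alpha_j)=-1$ if $i\sim j$, $0$ otherwise. The height of $\beta=\sum_k a_k\alpha_k$ is $\mathrm{ht}(\beta)=\sum_k a_k$. $B^\perp$ is the set of roots orthogonal to every element of $B$. *)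

theory Defs
  imports Main
begin

text \<open>A simply laced Coxeter diagram on nodes 1..n is given by a symmetric,
irreflexive adjacency relation adj.  Vectors of the root lattice are
coefficient functions nat => int (coefficient k of alpha_k, k in 1..n).\<close>

definition diagram :: "nat \<Rightarrow> (nat \<Rightarrow> nat \<Rightarrow> bool) \<Rightarrow> bool" where
  "diagram n adj \<longleftrightarrow> (\<forall>i j. adj i j \<longrightarrow> adj j i) \<and> (\<forall>i. \<not> adj i i)
      \<and> (\<forall>i j. adj i j \<longrightarrow> i \<in> {1..n} \<and> j \<in> {1..n})"

definition cartan :: "(nat \<Rightarrow> nat \<Rightarrow> bool) \<Rightarrow> nat \<Rightarrow> nat \<Rightarrow> int" where
  "cartan adj k l = (if k = l then 2 else if adj k l then -1 else 0)"

definition ip :: "nat \<Rightarrow> (nat \<Rightarrow> nat \<Rightarrow> bool) \<Rightarrow> (nat \<Rightarrow> int) \<Rightarrow> (nat \<Rightarrow> int) \<Rightarrow> int" where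
  "ip n adj u v = (\<Sum>k\<in>{1..n}. \<Sum>l\<in>{1..n}. u k * v l * cartan adj k l)"

definition simple_root :: "nat \<Rightarrow> nat \<Rightarrow> int" where
  "simple_root i = (\<lambda>k. if k = i then 1 else 0)"

definition height :: "nat \<Rightarrow> (nat \<Rightarrow> int) \<Rightarrow> int" where
  "height n v = (\<Sum>k\<in>{1..n}. v k)"

definition refl :: "nat \<Rightarrow> (nat \<Rightarrow> nat \<Rightarrow> bool) \<Rightarrow> nat \<Rightarrow> (nat \<Rightarrow> int) \<Rightarrow> (nat \<Rightarrow> int)" where
  "refl n adj i v = (\<lambda>k. v k - ip n adj (simple_root i) v * simple_root i k)"

inductive_set weyl :: "nat \<Rightarrow> (nat \<Rightarrow> nat \<Rightarrow> bool) \<Rightarrow> ((nat \<Rightarrow> int) \<Rightarrow> (nat \<Rightarrow> int)) set"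
  for n adj where
  weyl_id: "id \<in> weyl n adj"
| weyl_step: "w \<in> weyl n adj \<Longrightarrow> i \<in> {1..n} \<Longrightarrow> refl n adj i \<circ> w \<in> weyl n adj"

definition spherical :: "nat \<Rightarrow> (nat \<Rightarrow> nat \<Rightarrow> bool) \<Rightarrow> bool" where
  "spherical n adj \<longleftrightarrow> finite (weyl n adj)"

definition roots :: "nat \<Rightarrow> (nat \<Rightarrow> nat \<Rightarrow> bool) \<Rightarrow> (nat \<Rightarrow> int) set" where
  "roots n adj = {w (simple_root i) | w i. w \<in> weyl n adj \<and> i \<in> {1..n}}"

definition pos_roots :: "nat \<Rightarrow> (nat \<Rightarrow> nat \<Rightarrow> bool) \<Rightarrow> (nat \<Rightarrow> int) set" where
  "pos_roots n adj = {v \<in> roots n adj. \<forall>k. v k \<ge> 0}"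

end

theory Submission
  imports Defs
begin


lemma ip_lin2: "ip n adj u (\<lambda>k. a * x k + b * y k) = a * ip n adj u x + b * ip n adj u y"
  unfolding ip_def by (simp add: algebra_simps sum.distrib sum_distrib_left)

lemma ip_lin1: "ip n adj (\<lambda>k. a * x k + b * y k) v = a * ip n adj x v + b * ip n adj y v"
  unfolding ip_def by (simp add: algebra_simps sum.distrib sum_distrib_left)

lemma ip_diff1: "ip n adj (\<lambda>k. x k - y k) v = ip n adj x v - ip n adj y v"
  unfolding ip_def by (simp add: algebra_simps sum_subtractf)

lemma ip_diff2: "ip n adj v (\<lambda>k. x k - y k) = ip n adj v x - ip n adj v y"
  unfolding ip_def by (simp add: algebra_simps sum_subtractf)

lemma ip_add1: "ip n adj (\<lambda>k. x k + y k) v = ip n adj x v + ip n adj y v"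
  unfolding ip_def by (simp add: algebra_simps sum.distrib)

lemma ip_add2: "ip n adj v (\<lambda>k. x k + y k) = ip n adj v x + ip n adj v y"
  unfolding ip_def by (simp add: algebra_simps sum.distrib)

lemma ip_smult1: "ip n adj (\<lambda>k. a * x k) v = a * ip n adj x v"
  unfolding ip_def by (simp add: algebra_simps sum_distrib_left)

lemma ip_smult2: "ip n adj v (\<lambda>k. a * x k) = a * ip n adj v x"
  unfolding ip_def by (simp add: algebra_simps sum_distrib_left)

lemma cartan_sym: "diagram n adj \<Longrightarrow> cartan adj k l = cartan adj l k"
  unfolding diagram_def cartan_def by auto

lemma ip_sym: "diagram n adj \<Longrightarrow> ip n adj x y = ip n adj y x"
  unfolding ip_def
  apply (subst sum.swap)
  by (simp add: cartan_sym mult.commute mult.left_commute)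

lemma ip_cong: "(\<And>k. k \<in> {1..n} \<Longrightarrow> x k = x' k) \<Longrightarrow> (\<And>k. k \<in> {1..n} \<Longrightarrow> y k = y' k)
   \<Longrightarrow> ip n adj x y = ip n adj x' y'"
  unfolding ip_def by (intro sum.cong) auto

lemma ip_sr1: assumes "k \<in> {1..n}" shows "ip n adj (simple_root k) y = (\<Sum>l\<in>{1..n}. y l * cartan adj k l)"
proof -
  have "\<And>ka. (\<Sum>l\<in>{1..n}. simple_root k ka * y l * cartan adj ka l) = (if ka = k then (\<Sum>l\<in>{1..n}. y l * cartan adj k l) else 0)"
    by (simp add: simple_root_def)
  then show ?thesis unfolding ip_def using assms by simp
qed

lemma ip_sr2: assumes "k \<in> {1..n}" shows "ip n adj x (simple_root k) = (\<Sum>l\<in>{1..n}. x l * cartan adj l k)"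
proof -
  have "\<And>ka. (\<Sum>l\<in>{1..n}. x ka * simple_root k l * cartan adj ka l) = x ka * cartan adj ka k"
  proof -
    fix ka
    have "(\<Sum>l\<in>{1..n}. x ka * simple_root k l * cartan adj ka l) = (\<Sum>l\<in>{1..n}. if l = k then x ka * cartan adj ka k else 0)"
      by (rule sum.cong) (auto simp: simple_root_def)
    then show "(\<Sum>l\<in>{1..n}. x ka * simple_root k l * cartan adj ka l) = x ka * cartan adj ka k"
      using assms by simp
  qed
  then show ?thesis unfolding ip_def using assms by simp
qed

lemma ip_srsr: assumes "k \<in> {1..n}" "l \<in> {1..n}" shows "ip n adj (simple_root k) (simple_root l) = cartan adj k l"
proof -
  have "\<And>m. simple_root l m * cartan adj k m = (if m = l then cartan adj k l else 0)"
    by (simp add: simple_root_def)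
  then show ?thesis using assms by (simp add: ip_sr1)
qed

lemma height_sr: "k \<in> {1..n} \<Longrightarrow> height n (simple_root k) = 1"
  unfolding height_def simple_root_def by simp

lemma height_diff: "height n (\<lambda>k. x k - y k) = height n x - height n y"
  unfolding height_def by (simp add: sum_subtractf)

lemma refl_lin: "refl n adj i (\<lambda>k. a * x k + b * y k) = (\<lambda>k. a * refl n adj i x k + b * refl n adj i y k)"
  unfolding refl_def by (auto simp: ip_lin2 algebra_simps)

lemma weyl_lin: "w \<in> weyl n adj \<Longrightarrow> w (\<lambda>k. a * x k + b * y k) = (\<lambda>k. a * w x k + b * w y k)"
  by (induction rule: weyl.induct) (auto simp: refl_lin)

lemma weyl_comp: "w \<in> weyl n adj \<Longrightarrow> v \<in> weyl n adj \<Longrightarrow> w \<circ> v \<in> weyl n adj"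
  by (induction rule: weyl.induct) (auto simp: comp_assoc intro: weyl.weyl_step)

lemma refl_refl: "i \<in> {1..n} \<Longrightarrow> refl n adj i (refl n adj i x) = x"
proof -
  assume i: "i \<in> {1..n}"
  have 2: "ip n adj (simple_root i) (simple_root i) = 2" using i by (simp add: ip_srsr cartan_def)
  have "ip n adj (simple_root i) (refl n adj i x) = - ip n adj (simple_root i) x"
    unfolding refl_def using ip_diff2[of n adj "simple_root i" x "\<lambda>k. ip n adj (simple_root i) x * simple_root i k"]
    by (simp add: ip_smult2 2)
  then show ?thesis unfolding refl_def[of n adj i "refl n adj i x"] by (simp add: refl_def algebra_simps)
qed

lemma refl_ip: assumes "diagram n adj" "i \<in> {1..n}"
  shows "ip n adj (refl n adj i x) (refl n adj i y) = ip n adj x y"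
proof -
  have 2: "ip n adj (simple_root i) (simple_root i) = 2" using assms by (simp add: ip_srsr cartan_def)
  show ?thesis unfolding refl_def
    apply (simp only: ip_diff1 ip_diff2 ip_smult1 ip_smult2 2)
    by (simp add: ip_sym[OF assms(1), of x "simple_root i"] algebra_simps)
qed

lemma weyl_ip: "w \<in> weyl n adj \<Longrightarrow> diagram n adj \<Longrightarrow> ip n adj (w x) (w y) = ip n adj x y"
  by (induction rule: weyl.induct) (auto simp: refl_ip)

lemma root_norm: "v \<in> roots n adj \<Longrightarrow> diagram n adj \<Longrightarrow> ip n adj v v = 2"
  unfolding roots_def by (auto simp: weyl_ip ip_srsr cartan_def)



definition Qf :: "nat \<Rightarrow> (nat \<Rightarrow> nat \<Rightarrow> bool) \<Rightarrow> (nat \<Rightarrow> int) \<Rightarrow> (nat \<Rightarrow> int) \<Rightarrow> int" where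
  "Qf n adj x y = (\<Sum>w\<in>weyl n adj. \<Sum>m\<in>{1..n}. w x m * w y m)"

lemma Qf_sym: "Qf n adj x y = Qf n adj y x"
  unfolding Qf_def by (simp add: mult.commute)

lemma Qf_lin1: "Qf n adj (\<lambda>k. a * x k + b * y k) z = a * Qf n adj x z + b * Qf n adj y z"
proof -
  have "\<And>w. w \<in> weyl n adj \<Longrightarrow> (\<Sum>m\<in>{1..n}. w (\<lambda>k. a * x k + b * y k) m * w z m)
     = a * (\<Sum>m\<in>{1..n}. w x m * w z m) + b * (\<Sum>m\<in>{1..n}. w y m * w z m)"
    by (simp add: weyl_lin algebra_simps sum.distrib sum_distrib_left)
  then show ?thesis unfolding Qf_def by (simp add: sum.distrib sum_distrib_left)
qed

lemma Qf_inv: assumes "spherical n adj" "i \<in> {1..n}"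
  shows "Qf n adj (refl n adj i x) (refl n adj i y) = Qf n adj x y"
proof -
  let ?s = "refl n adj i"
  have sW: "?s \<in> weyl n adj" using weyl.weyl_step[OF weyl.weyl_id assms(2)] by simp
  have ss: "?s \<circ> ?s = id" using refl_refl[OF assms(2)] by auto
  have bij: "bij_betw (\<lambda>w. w \<circ> ?s) (weyl n adj) (weyl n adj)"
    by (rule bij_betw_byWitness[where f'="\<lambda>w. w \<circ> ?s"])
       (use weyl_comp sW ss in \<open>auto simp: comp_assoc\<close>)
  have "Qf n adj x y = (\<Sum>w\<in>weyl n adj. (\<lambda>w. \<Sum>m\<in>{1..n}. w x m * w y m) (w \<circ> ?s))"
    unfolding Qf_def by (rule sum.reindex_bij_betw[OF bij, symmetric])
  then show ?thesis unfolding Qf_def by simp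
qed

lemma Qf_pos: assumes "spherical n adj" "m \<in> {1..n}" "x m \<noteq> 0"
  shows "Qf n adj x x > 0"
proof -
  have fin: "finite (weyl n adj)" using assms(1) spherical_def by auto
  have nn: "\<And>w::(nat\<Rightarrow>int)\<Rightarrow>nat\<Rightarrow>int. (\<Sum>m\<in>{1..n}. w x m * w x m) \<ge> 0" by (intro sum_nonneg) simp
  have "0 < x m * x m" using assms(3) by (auto simp: zero_less_mult_iff linorder_neq_iff)
  also have "\<dots> \<le> (\<Sum>m\<in>{1..n}. id x m * id x m)"
    using member_le_sum[of m "{1..n}" "\<lambda>m. x m * x m"] assms(2) by simp
  also have "\<dots> \<le> Qf n adj x x" unfolding Qf_def
    using member_le_sum[of id "weyl n adj" "\<lambda>w. \<Sum>m\<in>{1..n}. w x m * w x m"] fin nn weyl.weyl_id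
    by simp
  finally show ?thesis .
qed

lemma Qf_key: assumes "spherical n adj" "diagram n adj" "k \<in> {1..n}"
  shows "2 * Qf n adj (simple_root k) x = Qf n adj (simple_root k) (simple_root k) * ip n adj (simple_root k) x"
proof -
  let ?a = "ip n adj (simple_root k) x"
  let ?e = "simple_root k"
  define x' where "x' = (\<lambda>m. 2 * x m + (- ?a) * ?e m)"
  have 2: "ip n adj ?e ?e = 2" using assms by (simp add: ip_srsr cartan_def)
  have "ip n adj ?e x' = 0" unfolding x'_def by (simp only: ip_lin2 2)
  then have fx: "refl n adj k x' = x'" unfolding refl_def by simp
  have fe: "refl n adj k ?e = (\<lambda>m. (-1) * ?e m + 0 * ?e m)" unfolding refl_def 2 by simp
  have "Qf n adj ?e x' = Qf n adj (refl n adj k ?e) (refl n adj k x')"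
    using Qf_inv[OF assms(1,3)] by simp
  also have "\<dots> = - Qf n adj ?e x'" unfolding fx fe Qf_lin1 by simp
  finally have "Qf n adj ?e x' = 0" by simp
  moreover have "Qf n adj ?e x' = 2 * Qf n adj ?e x - ?a * Qf n adj ?e ?e"
    unfolding x'_def by (subst Qf_sym, subst Qf_lin1) (simp add: Qf_sym)
  ultimately show ?thesis by (simp add: mult.commute)
qed

lemma Qf_sum1: "finite S \<Longrightarrow> Qf n adj (\<lambda>m. \<Sum>k\<in>S. c k * v k m) y = (\<Sum>k\<in>S. c k * Qf n adj (v k) y)"
proof (induction S rule: finite_induct)
  case empty
  have "Qf n adj (\<lambda>m. 0 * v undefined m + 0 * v undefined m) y = 0" by (simp only: Qf_lin1)
  then show ?case by simp
next
  case (insert k0 S)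
  have "(\<lambda>m. \<Sum>k\<in>insert k0 S. c k * v k m) = (\<lambda>m. c k0 * v k0 m + 1 * (\<Sum>k\<in>S. c k * v k m))"
    using insert by simp
  then show ?case using insert by (simp only: Qf_lin1) simp
qed

lemma supp_expand: assumes "\<forall>k. k \<notin> {1..n} \<longrightarrow> x k = 0"
  shows "x = (\<lambda>m. \<Sum>k\<in>{1..n}. x k * simple_root k m)"
proof
  fix m
  have "(\<Sum>k\<in>{1..n}. x k * simple_root k m) = (\<Sum>k\<in>{1..n}. if k = m then x m else 0)"
    by (rule sum.cong) (auto simp: simple_root_def)
  then show "x m = (\<Sum>k\<in>{1..n}. x k * simple_root k m)" using assms by auto
qed

lemma Qf_expand: assumes "\<forall>k. k \<notin> {1..n} \<longrightarrow> x k = 0"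
  shows "Qf n adj x y = (\<Sum>k\<in>{1..n}. x k * Qf n adj (simple_root k) y)"
  by (subst supp_expand[OF assms]) (simp add: Qf_sum1)



lemma ip_expand_sr: "ip n adj z z = (\<Sum>k\<in>{1..n}. z k * ip n adj (simple_root k) z)"
proof -
  have "\<And>k. k \<in> {1..n} \<Longrightarrow> (\<Sum>l\<in>{1..n}. z k * z l * cartan adj k l) = z k * ip n adj (simple_root k) z"
    by (simp add: ip_sr1 sum_distrib_left mult.assoc)
  then show ?thesis by (simp add: ip_def[of n adj z z])
qed

lemma Qf_class: assumes sph: "spherical n adj" and dg: "diagram n adj"
  and supp: "\<forall>k. k \<notin> {1..n} \<longrightarrow> z k = 0"
  and cls: "\<forall>k\<in>{1..n}. z k \<noteq> 0 \<longrightarrow> Qf n adj (simple_root k) (simple_root k) = v"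
  shows "2 * Qf n adj z z = v * ip n adj z z"
proof -
  have "2 * Qf n adj z z = (\<Sum>k\<in>{1..n}. z k * (2 * Qf n adj (simple_root k) z))"
    by (simp add: Qf_expand[OF supp] sum_distrib_left algebra_simps)
  also have "\<dots> = (\<Sum>k\<in>{1..n}. z k * (Qf n adj (simple_root k) (simple_root k) * ip n adj (simple_root k) z))"
    using Qf_key[OF sph dg] by simp
  also have "\<dots> = (\<Sum>k\<in>{1..n}. v * (z k * ip n adj (simple_root k) z))"
    using cls by (intro sum.cong) auto
  also have "\<dots> = v * ip n adj z z" by (simp add: ip_expand_sr sum_distrib_left)
  finally show ?thesis .
qed

lemma q_adj: assumes sph: "spherical n adj" and dg: "diagram n adj"
  and k: "k \<in> {1..n}" and l: "l \<in> {1..n}" and c: "cartan adj k l \<noteq> 0"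
  shows "Qf n adj (simple_root k) (simple_root k) = Qf n adj (simple_root l) (simple_root l)"
proof (cases "k = l")
  case False
  then have a: "adj k l" "adj l k" using c dg unfolding cartan_def diagram_def by (auto split: if_splits)
  have "2 * Qf n adj (simple_root k) (simple_root l) = - Qf n adj (simple_root k) (simple_root k)"
    using Qf_key[OF sph dg k, of "simple_root l"] ip_srsr[OF k l] a False by (simp add: cartan_def)
  moreover have "2 * Qf n adj (simple_root l) (simple_root k) = - Qf n adj (simple_root l) (simple_root l)"
    using Qf_key[OF sph dg l, of "simple_root k"] ip_srsr[OF l k] a False by (simp add: cartan_def)
  ultimately show ?thesis by (simp add: Qf_sym)
qed simp

lemma ip_zero: "\<forall>k\<in>{1..n}. x k = 0 \<Longrightarrow> ip n adj x x = 0"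
  unfolding ip_def by simp

lemma pos_aux: assumes sph: "spherical n adj" and dg: "diagram n adj"
  shows "card {k\<in>{1..n}. x k \<noteq> 0} \<le> N \<Longrightarrow> \<forall>k. k \<notin> {1..n} \<longrightarrow> x k = 0 \<Longrightarrow>
     ip n adj x x \<ge> 0 \<and> ((\<exists>m\<in>{1..n}. x m \<noteq> 0) \<longrightarrow> ip n adj x x > 0)"
proof (induction N arbitrary: x)
  case 0
  then have "\<forall>k\<in>{1..n}. x k = 0" by auto
  then show ?case by (simp add: ip_zero)
next
  case (Suc N)
  show ?case
  proof (cases "\<exists>m\<in>{1..n}. x m \<noteq> 0")
    case False
    then show ?thesis by (simp add: ip_zero)
  next
    case True
    then obtain m where m: "m \<in> {1..n}" "x m \<noteq> 0" by auto
    define q where "q = (\<lambda>k. Qf n adj (simple_root k) (simple_root k))"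
    define v where "v = q m"
    define z where "z = (\<lambda>k. if k \<in> {1..n} \<and> q k = v then x k else 0)"
    define r where "r = (\<lambda>k. if k \<in> {1..n} \<and> q k \<noteq> v then x k else 0)"
    have xzr: "x = (\<lambda>k. z k + r k)" using Suc.prems(2) unfolding z_def r_def by (intro ext) auto
    have sub: "{k\<in>{1..n}. r k \<noteq> 0} \<subseteq> {k\<in>{1..n}. x k \<noteq> 0} - {m}"
      unfolding r_def v_def by auto
    have "card {k\<in>{1..n}. r k \<noteq> 0} \<le> card ({k\<in>{1..n}. x k \<noteq> 0} - {m})"
      by (rule card_mono[OF _ sub]) simp
    also have "\<dots> = card {k\<in>{1..n}. x k \<noteq> 0} - 1" using m by (simp add: card_Diff_singleton)
    finally have "card {k\<in>{1..n}. r k \<noteq> 0} \<le> N" using Suc.prems(1) by simp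
    then have rr: "ip n adj r r \<ge> 0" using Suc.IH[of r] unfolding r_def by auto
    have zsupp: "\<forall>k. k \<notin> {1..n} \<longrightarrow> z k = 0" unfolding z_def by auto
    have zcls: "\<forall>k\<in>{1..n}. z k \<noteq> 0 \<longrightarrow> q k = v" unfolding z_def by auto
    have vpos: "v > 0" unfolding v_def q_def using Qf_pos[OF sph m(1), of "simple_root m"]
      by (simp add: simple_root_def)
    have Qz: "Qf n adj z z > 0" using Qf_pos[OF sph m(1), of z] m unfolding z_def v_def by simp
    have "2 * Qf n adj z z = v * ip n adj z z"
      using Qf_class[OF sph dg zsupp] zcls unfolding q_def by blast
    then have "v * ip n adj z z > 0" using Qz by linarith
    then have zz: "ip n adj z z > 0" using vpos by (simp add: zero_less_mult_iff)
    have zr: "ip n adj z r = 0" unfolding ip_def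
    proof (intro sum.neutral ballI)
      fix k l assume k: "k \<in> {1..n}" and l: "l \<in> {1..n}"
      show "z k * r l * cartan adj k l = 0"
      proof (cases "z k = 0 \<or> r l = 0 \<or> cartan adj k l = 0")
        case False
        then have "q k = v" "q l \<noteq> v" using k l unfolding z_def r_def by (auto split: if_splits)
        moreover have "q k = q l" using q_adj[OF sph dg k l] False unfolding q_def by auto
        ultimately show ?thesis by simp
      qed auto
    qed
    have "ip n adj x x = ip n adj z z + 2 * ip n adj z r + ip n adj r r"
      unfolding xzr by (simp add: ip_add1 ip_add2 ip_sym[OF dg, of r z])
    then show ?thesis using zz zr rr by simp
  qed
qed

lemma ip_pos: assumes "spherical n adj" "diagram n adj" "\<forall>k. k \<notin> {1..n} \<longrightarrow> x k = 0"
  "m \<in> {1..n}" "x m \<noteq> 0" shows "ip n adj x x > 0"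
  using pos_aux[OF assms(1,2) order_refl assms(3)] assms(4,5) by auto

lemma sum_sym_even: fixes g :: "nat \<Rightarrow> nat \<Rightarrow> int"
  assumes "\<And>k l. g k l = g l k" "\<And>k. even (g k k)"
  shows "even (\<Sum>k\<in>{1..N}. \<Sum>l\<in>{1..N}. g k l)"
proof (induction N)
  case 0 then show ?case by simp
next
  case (Suc N)
  have e: "{1..Suc N} = insert (Suc N) {1..N}" by auto
  have s1: "(\<Sum>k\<in>{1..N}. g k (Suc N)) = (\<Sum>l\<in>{1..N}. g (Suc N) l)"
    by (rule sum.cong[OF refl]) (rule assms(1))
  have "(\<Sum>k\<in>{1..Suc N}. \<Sum>l\<in>{1..Suc N}. g k l)
     = g (Suc N) (Suc N) + (\<Sum>l\<in>{1..N}. g (Suc N) l) + ((\<Sum>k\<in>{1..N}. g k (Suc N)) + (\<Sum>k\<in>{1..N}. \<Sum>l\<in>{1..N}. g k l))"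
    unfolding e by (simp add: sum.distrib)
  also have "\<dots> = g (Suc N) (Suc N) + 2 * (\<Sum>l\<in>{1..N}. g (Suc N) l) + (\<Sum>k\<in>{1..N}. \<Sum>l\<in>{1..N}. g k l)"
    unfolding s1 by simp
  finally show ?case using Suc assms(2) by simp
qed

lemma ip_even: assumes "diagram n adj" shows "even (ip n adj x x)"
  unfolding ip_def
proof (rule sum_sym_even)
  fix k l
  show "x k * x l * cartan adj k l = x l * x k * cartan adj l k"
    using cartan_sym[OF assms, of k l] by simp
  show "even (x k * x k * cartan adj k k)" by (simp add: cartan_def)
qed

lemma ip_ge2: assumes "spherical n adj" "diagram n adj" "\<forall>k. k \<notin> {1..n} \<longrightarrow> x k = 0"
  "m \<in> {1..n}" "x m \<noteq> 0" shows "ip n adj x x \<ge> 2"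
proof -
  have p: "ip n adj x x > 0" by (rule ip_pos[OF assms])
  from ip_even[OF assms(2), of x] obtain b where "ip n adj x x = 2 * b" by (auto elim: evenE)
  then show ?thesis using p by presburger
qed



lemma no_height0: assumes sph: "spherical n adj" and dg: "diagram n adj"
  and n2: "ip n adj z z = 2" and h0: "height n z = 0"
  shows False
proof -
  define zp where "zp = (\<lambda>k. if k \<in> {1..n} then max (z k) 0 else 0)"
  define zm where "zm = (\<lambda>k. if k \<in> {1..n} then max (- z k) 0 else 0)"
  have "ip n adj z z = ip n adj (\<lambda>k. zp k - zm k) (\<lambda>k. zp k - zm k)"
    by (rule ip_cong) (auto simp: zp_def zm_def)
  also have "\<dots> = ip n adj zp zp - 2 * ip n adj zp zm + ip n adj zm zm"
    by (simp add: ip_diff1 ip_diff2 ip_sym[OF dg, of zm zp])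
  finally have eq: "ip n adj z z = ip n adj zp zp - 2 * ip n adj zp zm + ip n adj zm zm" .
  have cross: "ip n adj zp zm \<le> 0" unfolding ip_def
  proof (intro sum_nonpos ballI)
    fix k l assume k: "k \<in> {1..n}" and l: "l \<in> {1..n}"
    show "zp k * zm l * cartan adj k l \<le> 0"
    proof (cases "k = l")
      case True then show ?thesis by (cases "z l \<ge> 0") (auto simp: zp_def zm_def)
    next
      case False
      have "zp k * zm l \<ge> 0" by (simp add: zp_def zm_def)
      moreover have "cartan adj k l \<le> 0" using False by (simp add: cartan_def)
      ultimately show ?thesis by (simp add: mult_nonneg_nonpos)
    qed
  qed
  have nz: "\<exists>k\<in>{1..n}. z k \<noteq> 0"
  proof (rule ccontr)
    assume "\<not> ?thesis"
    then have "ip n adj z z = 0" by (simp add: ip_zero)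
    with n2 show False by simp
  qed
  have pos: "\<exists>k\<in>{1..n}. z k > 0"
  proof (rule ccontr)
    assume a: "\<not> ?thesis"
    have "(\<Sum>k\<in>{1..n}. - z k) = 0" using h0 unfolding height_def by (simp add: sum_negf)
    have nn: "\<forall>k\<in>{1..n}. 0 \<le> - z k" using a by (simp add: not_less)
    then have "\<forall>k\<in>{1..n}. - z k = 0" using sum_nonneg_eq_0_iff[of "{1..n}" "\<lambda>k. - z k"] \<open>(\<Sum>k\<in>{1..n}. - z k) = 0\<close> by simp
    then show False using nz by auto
  qed
  have neg: "\<exists>k\<in>{1..n}. z k < 0"
  proof (rule ccontr)
    assume a: "\<not> ?thesis"
    have "(\<Sum>k\<in>{1..n}. z k) = 0" using h0 unfolding height_def by simp
    have nn: "\<forall>k\<in>{1..n}. 0 \<le> z k" using a by (simp add: not_less)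
    then have "\<forall>k\<in>{1..n}. z k = 0" using sum_nonneg_eq_0_iff[of "{1..n}" "\<lambda>k. z k"] \<open>(\<Sum>k\<in>{1..n}. z k) = 0\<close> by simp
    then show False using nz by auto
  qed
  from pos obtain a where a: "a \<in> {1..n}" "z a > 0" by auto
  from neg obtain b where b: "b \<in> {1..n}" "z b < 0" by auto
  have "ip n adj zp zp \<ge> 2"
    by (rule ip_ge2[OF sph dg _ a(1)]) (use a in \<open>auto simp: zp_def\<close>)
  moreover have "ip n adj zm zm \<ge> 2"
    by (rule ip_ge2[OF sph dg _ b(1)]) (use b in \<open>auto simp: zm_def\<close>)
  ultimately show False using eq cross n2 by linarith
qed

theorem proposition2p1:
  fixes n :: nat and adj :: "nat \<Rightarrow> nat \<Rightarrow> bool"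
    and B :: "(nat \<Rightarrow> int) set" and \<beta> \<gamma> :: "nat \<Rightarrow> int" and j :: nat
  assumes "diagram n adj" and "spherical n adj"
    and "B \<subseteq> pos_roots n adj"
    and "\<forall>x\<in>B. \<forall>y\<in>B. x \<noteq> y \<longrightarrow> ip n adj x y = 0"
    and "\<beta> \<in> B" and "\<gamma> \<in> B" and "j \<in> {1..n}"
  shows "\<not> (\<exists>i\<in>{1..n}. ip n adj (simple_root i) \<beta> = 1 \<and> ip n adj (simple_root i) \<gamma> = -1
              \<and> height n \<beta> = height n \<gamma> + 1)
       \<and> (ip n adj (simple_root j) \<beta> = -1 \<and> ip n adj (simple_root j) \<gamma> = 1
           \<and> height n \<gamma> = height n \<beta> + 2
         \<longrightarrow> \<not> (\<exists>i\<in>{1..n}. (\<forall>b\<in>B. ip n adj (simple_root i) b = 0) \<and> adj i j))"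
proof -
  note dg = assms(1) and sph = assms(2)
  have bb: "ip n adj \<beta> \<beta> = 2" using assms(3,5) dg root_norm unfolding pos_roots_def by auto
  have gg: "ip n adj \<gamma> \<gamma> = 2" using assms(3,6) dg root_norm unfolding pos_roots_def by auto
  have part1: "\<not> (\<exists>i\<in>{1..n}. ip n adj (simple_root i) \<beta> = 1 \<and> ip n adj (simple_root i) \<gamma> = -1
              \<and> height n \<beta> = height n \<gamma> + 1)"
  proof
    assume "\<exists>i\<in>{1..n}. ip n adj (simple_root i) \<beta> = 1 \<and> ip n adj (simple_root i) \<gamma> = -1
              \<and> height n \<beta> = height n \<gamma> + 1"
    then obtain i where i: "i \<in> {1..n}" "ip n adj (simple_root i) \<beta> = 1" "ip n adj (simple_root i) \<gamma> = -1"
      "height n \<beta> = height n \<gamma> + 1" by blast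
    have "\<beta> \<noteq> \<gamma>" using i by auto
    then have bg: "ip n adj \<beta> \<gamma> = 0" using assms(4,5,6) by blast
    have ii: "ip n adj (simple_root i) (simple_root i) = 2" using i by (simp add: ip_srsr cartan_def)
    define d where "d = (\<lambda>k. \<beta> k - simple_root i k - \<gamma> k)"
    have "ip n adj d d = 2"
    proof -
      have f: "ip n adj \<beta> (simple_root i) = 1" "ip n adj \<gamma> (simple_root i) = -1" "ip n adj \<gamma> \<beta> = 0"
        using i bg ip_sym[OF dg] by metis+
      show ?thesis unfolding d_def by (simp add: ip_diff1 ip_diff2 f i ii bb gg bg)
    qed
    moreover have "height n d = 0" unfolding d_def using i by (simp add: height_diff height_sr)
    ultimately show False using no_height0[OF sph dg] by blast
  qed
  have part2: "ip n adj (simple_root j) \<beta> = -1 \<and> ip n adj (simple_root j) \<gamma> = 1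
           \<and> height n \<gamma> = height n \<beta> + 2
         \<longrightarrow> \<not> (\<exists>i\<in>{1..n}. (\<forall>b\<in>B. ip n adj (simple_root i) b = 0) \<and> adj i j)"
  proof (intro impI notI)
    assume h: "ip n adj (simple_root j) \<beta> = -1 \<and> ip n adj (simple_root j) \<gamma> = 1
           \<and> height n \<gamma> = height n \<beta> + 2"
    assume "\<exists>i\<in>{1..n}. (\<forall>b\<in>B. ip n adj (simple_root i) b = 0) \<and> adj i j"
    then obtain i where i: "i \<in> {1..n}" "\<forall>b\<in>B. ip n adj (simple_root i) b = 0" "adj i j" by blast
    have ib: "ip n adj (simple_root i) \<beta> = 0" and ig: "ip n adj (simple_root i) \<gamma> = 0"
      using i(2) assms(5,6) by auto
    have "\<beta> \<noteq> \<gamma>" using h by auto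
    then have bg: "ip n adj \<beta> \<gamma> = 0" using assms(4,5,6) by blast
    have ij0: "i \<noteq> j" using i(3) dg unfolding diagram_def by auto
    have ij: "ip n adj (simple_root i) (simple_root j) = -1"
      using i(1,3) assms(7) ij0 by (simp add: ip_srsr cartan_def)
    have ii: "ip n adj (simple_root i) (simple_root i) = 2" using i by (simp add: ip_srsr cartan_def)
    have jj: "ip n adj (simple_root j) (simple_root j) = 2" using assms(7) by (simp add: ip_srsr cartan_def)
    define d where "d = (\<lambda>k. \<gamma> k - \<beta> k - simple_root i k - simple_root j k)"
    have "ip n adj d d = 2"
    proof -
      have f: "ip n adj \<beta> (simple_root i) = 0" "ip n adj \<gamma> (simple_root i) = 0" "ip n adj \<gamma> \<beta> = 0"
        "ip n adj \<beta> (simple_root j) = -1" "ip n adj \<gamma> (simple_root j) = 1"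
        "ip n adj (simple_root j) (simple_root i) = -1"
        using h ib ig ij bg ip_sym[OF dg] by metis+
      show ?thesis unfolding d_def by (simp add: ip_diff1 ip_diff2 f h ib ig ij ii jj bb gg bg)
    qed
    moreover have "height n d = 0" unfolding d_def using i(1) assms(7) h by (simp add: height_diff height_sr)
    ultimately show False using no_height0[OF sph dg] by blast
  qed
  show ?thesis using part1 part2 by blast
qed

end
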